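(* Let $k\geq 1$ be an integer and let $\psi\in\Psi_{2k+1}$. For $d\in\{1,2k+1\}$, let $b_{n,d}$ denote the $d$-dimensional Schoenberg coefficients of $\psi$; in particular, $b_{n,1}$ are its Fourier cosine coefficients, i.e. $\psi(\theta)=\sum_{n\ge0} b_{n,1}\cos(n\theta)$. Then for every integer $n\geq 0$, \[ b_{n,2k+1}=\sum_{i=0}^k a_i(n,k)\,b_{n+2i,1}, \] where \[ a_i(n,k)=\frac{(-1)^i}{2^k}\binom{k}{i}\frac{(n+k)(n+2i)}{(2k-1)!!}\,\frac{(n+1)_{(2k-1)}}{(n+i)_{(k+1)}}\qquad\text{for }(i,n)\neq(0,0), \] and $a_0(0,k)=1$.
   Context: For an integer $d\ge1$, $\mathbb{S}^d=\{x\in\mathbb{R}^{d+1}:\|x\|=1\}$ and $\theta(x,y)=\arccos(\langle x,y\rangle)$ is the great circle distance. $\Psi_d$ denotes the class of continuous functions $\psi:[0,\pi]\to\mathbb{R}$ with $\psi(0)=1$ such that $(x,y)\mapsto\psi(\theta(x,y))$ is positive definite on $\mathbb{S}^d$, i.e. $\sum_{i,j=1}^m c_ic_j\psi(\theta(x_i,x_j))\ge0$ for all $m\ge1$, all real $c_1,\dots,c_m$ and all distinct $x_1,\dots,x_m\in\mathbb{S}^d$. One has $\Psi_1\supset\Psi_2\supset\cdots$, and (Schoenberg) $\psi\in\Psi_d$ iff $\psi(\theta)=\sum_{n=0}^\infty b_{n,d}\,\frac{C_n^{(d-1)/2}(\cos\theta)}{C_n^{(d-1)/2}(1)}$ for unique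 coefficients $b_{n,d}\ge0$ with $\sum_n b_{n,d}=1$; these $b_{n,d}$ are the $d$-dimensional Schoenberg coefficients of $\psi$. Here $C_n^\lambda$ are Gegenbauer polynomials, with the convention that for $d=1$ the normalized term $C_n^0(\cos\theta)/C_n^0(1)$ is $\cos(n\theta)$, and $C_n^{1/2}=P_n$ are Legendre polynomials. Notation: $(2k-1)!!=\prod_{j=1}^k(2j-1)$, and $(x)_{(m)}=x(x+1)\cdots(x+m-1)$ is the Pochhammer symbol (with $(x)_{(0)}=1$). *)

theory Defs
  imports "HOL-Analysis.Analysis"
begin

text \<open>The sphere S^d in R^(d+1), with points represented as functions nat => real
  supported on {0..d}.\<close>
definition sphere_pts :: "nat \<Rightarrow> (nat \<Rightarrow> real) set" where
  "sphere_pts d = {x. (\<forall>i>d. x i = 0) \<and> (\<Sum>i\<le>d. (x i)\<^sup>2) = 1}"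

definition sp_inner :: "nat \<Rightarrow> (nat \<Rightarrow> real) \<Rightarrow> (nat \<Rightarrow> real) \<Rightarrow> real" where
  "sp_inner d x y = (\<Sum>i\<le>d. x i * y i)"

definition gc_dist :: "nat \<Rightarrow> (nat \<Rightarrow> real) \<Rightarrow> (nat \<Rightarrow> real) \<Rightarrow> real" where
  "gc_dist d x y = arccos (sp_inner d x y)"

definition pos_def_on_sphere :: "nat \<Rightarrow> (real \<Rightarrow> real) \<Rightarrow> bool" where
  "pos_def_on_sphere d \<psi> \<longleftrightarrow>
     (\<forall>(m::nat) (c::nat \<Rightarrow> real) (x::nat \<Rightarrow> nat \<Rightarrow> real).
        m \<ge> 1 \<longrightarrow> (\<forall>i<m. x i \<in> sphere_pts d) \<longrightarrow> inj_on x {..<m} \<longrightarrow>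
        (\<Sum>i<m. \<Sum>j<m. c i * c j * \<psi> (gc_dist d (x i) (x j))) \<ge> 0)"

definition Psi :: "nat \<Rightarrow> (real \<Rightarrow> real) set" where
  "Psi d = {\<psi>. continuous_on {0..pi} \<psi> \<and> \<psi> 0 = 1 \<and> pos_def_on_sphere d \<psi>}"

text \<open>Gegenbauer polynomial C_n^lam(x) (explicit formula; Gamma(n-k+lam)/Gamma(lam)
  written as a Pochhammer symbol).\<close>
definition gegenbauer :: "real \<Rightarrow> nat \<Rightarrow> real \<Rightarrow> real" where
  "gegenbauer lam n x = (\<Sum>k\<le>n div 2. (-1)^k * pochhammer lam (n - k)
        / (fact k * fact (n - 2*k)) * (2*x)^(n - 2*k))"

definition schoenberg_basis :: "nat \<Rightarrow> nat \<Rightarrow> real \<Rightarrow> real" where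
  "schoenberg_basis d n t =
     (if d = 1 then cos (real n * t)
      else gegenbauer ((real d - 1) / 2) n (cos t) / gegenbauer ((real d - 1) / 2) n 1)"

definition is_schoenberg_coeffs :: "nat \<Rightarrow> (real \<Rightarrow> real) \<Rightarrow> (nat \<Rightarrow> real) \<Rightarrow> bool" where
  "is_schoenberg_coeffs d \<psi> b \<longleftrightarrow>
     (\<forall>n. b n \<ge> 0) \<and> summable b \<and> suminf b = 1 \<and>
     (\<forall>t\<in>{0..pi}. (\<lambda>n. b n * schoenberg_basis d n t) sums \<psi> t)"

definition dfact_odd :: "nat \<Rightarrow> real" where
  "dfact_odd k = (\<Prod>j=1..k. real (2*j - 1))"

definition coef_a :: "nat \<Rightarrow> nat \<Rightarrow> nat \<Rightarrow> real" where
  "coef_a i n k =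
     (if i = 0 \<and> n = 0 then 1
      else (-1)^i / 2^k * real (k choose i) * (real (n + k) * real (n + 2*i)) / dfact_odd k
           * pochhammer (real n + 1) (2*k - 1) / pochhammer (real n + real i) (k + 1))"

end

theory Submission
  imports Defs
begin


definition al :: "nat \<Rightarrow> nat \<Rightarrow> real" where
  "al j N = (if j = 0 \<and> N = 0 then 1
     else real (N + 2*j) * real (N + 2*j + 1) / (2 * real (2*j+1) * real (N + j)))"

definition be :: "nat \<Rightarrow> nat \<Rightarrow> real" where
  "be j N = real N * (real N - 1) / (2 * real (2*j+1) * real (N + j))"

lemma al_pos: "al j N > 0"
  by (auto simp: al_def intro!: divide_pos_pos)

lemma be_nonneg: "be j N \<ge> 0"
  by (cases N) (auto simp: be_def intro!: divide_nonneg_pos)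

function gc :: "nat \<Rightarrow> nat \<Rightarrow> nat \<Rightarrow> real" where
  "gc 0 N m = (if N = m then 1 else 0)"
| "gc (Suc j) N m = (if N < 2 then gc j N m / al j N
      else (gc j N m + be j N * gc (Suc j) (N - 2) m) / al j N)"
  by pat_completeness auto
termination by (relation "measures [\<lambda>(j,N,m). j, \<lambda>(j,N,m). N]") auto

declare gc.simps(2)[simp del]

fun ac :: "nat \<Rightarrow> nat \<Rightarrow> nat \<Rightarrow> real" where
  "ac 0 i n = (if i = 0 then 1 else 0)"
| "ac (Suc j) i n = al j n * ac j i n - (if i = 0 then 0 else be j (n+2) * ac j (i - 1) (n+2))"

lemma gc_nonneg: "gc j N m \<ge> 0"
proof (induction j N m rule: gc.induct)
  case (1 N m) then show ?case by simp
next
  case (2 j N m) then show ?case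
    using al_pos[of j N] be_nonneg[of j N] unfolding gc.simps(2)[of j N m] by (auto intro!: divide_nonneg_pos)
qed

lemma gc_zero: "m > N \<Longrightarrow> gc j N m = 0"
proof (induction j N m rule: gc.induct)
  case (1 N m) then show ?case by simp
next
  case (2 j N m) then show ?case unfolding gc.simps(2)[of j N m] by auto
qed

lemma ac_zero: "i > j \<Longrightarrow> ac j i n = 0"
  by (induction j arbitrary: i n) auto

definition Dc :: "nat \<Rightarrow> nat \<Rightarrow> nat \<Rightarrow> real" where
  "Dc j n N = (\<Sum>i\<le>j. ac j i n * gc j N (n + 2*i))"

definition Ec :: "nat \<Rightarrow> nat \<Rightarrow> nat \<Rightarrow> real" where
  "Ec j n N = (\<Sum>i\<le>j. ac j i n * gc (Suc j) N (n + 2*i))"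

lemma Ec_rec: "Ec j n N = (if N < 2 then Dc j n N / al j N
     else (Dc j n N + be j N * Ec j n (N - 2)) / al j N)"
  unfolding Ec_def Dc_def gc.simps(2)[of j N] by (auto simp: sum_divide_distrib sum_distrib_left add_divide_distrib
       sum.distrib algebra_simps)

lemma Ec_zero: "N < n \<Longrightarrow> Ec j n N = 0"
  by (auto simp: Ec_def gc_zero intro!: sum.neutral)

lemma Dc_step: "Dc (Suc j) n N = al j n * Ec j n N - be j (n+2) * Ec j (n+2) N"
proof -
  have "Dc (Suc j) n N = (\<Sum>i\<le>Suc j. al j n * ac j i n * gc (Suc j) N (n + 2*i))
     - (\<Sum>i\<le>Suc j. (if i = 0 then 0 else be j (n+2) * ac j (i - 1) (n+2)) * gc (Suc j) N (n + 2*i))"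
    by (simp only: Dc_def ac.simps left_diff_distrib sum_subtractf)
  also have "(\<Sum>i\<le>Suc j. al j n * ac j i n * gc (Suc j) N (n + 2*i)) = al j n * Ec j n N"
    by (simp add: Ec_def sum_distrib_left ac_zero mult.assoc)
  also have "(\<Sum>i\<le>Suc j. (if i = 0 then 0 else be j (n+2) * ac j (i - 1) (n+2)) * gc (Suc j) N (n + 2*i))
      = (\<Sum>i\<le>j. be j (n+2) * ac j i (n+2) * gc (Suc j) N (n + 2 + 2*i))"
    by (subst sum.atMost_Suc_shift) (simp add: algebra_simps)
  also have "\<dots> = be j (n+2) * Ec j (n+2) N"
    by (simp add: Ec_def sum_distrib_left mult.assoc)
  finally show ?thesis .
qed

lemma Dc_delta: "Dc j n N = (if N = n then 1 else 0)"
proof (induction j arbitrary: n N)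
  case 0
  then show ?case by (simp add: Dc_def)
next
  case (Suc j)
  have E_nn: "Ec j n n = 1 / al j n" for n
    using Suc.IH[of n n] Ec_zero[of "n - 2" n j] Ec_rec[of j n n]
    by (cases "n < 2") auto
  have key: "al j n * Ec j n N = be j (n+2) * Ec j (n+2) N" if "N > n" for n N
    using that
  proof (induction N rule: less_induct)
    case (less N)
    have alN: "al j N \<noteq> 0" using al_pos[of j N] by simp
    show ?case
    proof (cases "N = n + 1")
      case True
      then show ?thesis using Ec_rec[of j n N] Ec_rec[of j "n+2" N] Suc.IH Ec_zero[of "N - 2" n j]
        Ec_zero[of N "n+2" j] by auto
    next
      case False
      show ?thesis
      proof (cases "N = n + 2")
        case True
        have "Ec j n N = be j N * Ec j n n / al j N"
          using Ec_rec[of j n N] Suc.IH[of n N] True by simp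
        moreover have "Ec j (n+2) N = 1 / al j N"
          using True E_nn by simp
        ultimately show ?thesis using True E_nn[of n] al_pos[of j n] by (simp add: field_simps)
      next
        case False
        with `N \<noteq> n+1` less.prems have "N - 2 > n" "N \<ge> 2" by auto
        have ih: "al j n * Ec j n (N-2) = be j (n+2) * Ec j (n+2) (N-2)"
          using less.IH[of "N-2"] `N - 2 > n` `N \<ge> 2` by auto
        have "Ec j n N = be j N * Ec j n (N-2) / al j N"
          using Ec_rec[of j n N] Suc.IH[of n N] `N \<ge> 2` less.prems by simp
        moreover have "Ec j (n+2) N = be j N * Ec j (n+2) (N-2) / al j N"
          using Ec_rec[of j "n+2" N] Suc.IH[of "n+2" N] `N \<ge> 2` `N - 2 > n` by simp
        ultimately show ?thesis using ih by (simp add: field_simps)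
      qed
    qed
  qed
  show ?case
  proof (cases "N < n")
    case True then show ?thesis using Dc_step Ec_zero by simp
  next
    case False
    show ?thesis
    proof (cases "N = n")
      case True then show ?thesis using Dc_step E_nn Ec_zero[of n "n+2" j] al_pos[of j n] by simp
    next
      case False
      then show ?thesis using key[of n N] `\<not> N < n` Dc_step by simp
    qed
  qed
qed


lemma dfact_odd_Suc: "dfact_odd (Suc k) = dfact_odd k * real (2*k+1)"
  by (simp add: dfact_odd_def)

lemma dfact_odd_pos: "dfact_odd k > 0"
  by (auto simp: dfact_odd_def intro!: prod_pos)

lemma coef_a_zero: "k \<ge> 1 \<Longrightarrow> i > k \<Longrightarrow> coef_a i n k = 0"
  by (simp add: coef_a_def)

lemma binom_rel: "i \<ge> 1 \<Longrightarrow> real (k choose i) * real i = real (k choose (i - 1)) * (real k + 1 - real i)"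
proof -
  assume i: "i \<ge> 1"
  have a: "(Suc k choose i) = (k choose (i-1)) + (k choose i)" using choose_reduce_nat[of "Suc k" i] i by simp
  have b: "i * (Suc k choose i) = Suc k * (k choose (i - 1))" using times_binomial_minus1_eq[of i "Suc k"] i by simp
  have "real i * real (k choose (i-1)) + real i * real (k choose i) = (real k + 1) * real (k choose (i-1))"
    using arg_cong[OF b, of real] a by (simp add: algebra_simps)
  then show ?thesis by (simp add: algebra_simps)
qed

lemma two_suc: "k \<ge> 1 \<Longrightarrow> 2 * Suc k - 1 = Suc (Suc (2*k - 1))" by simp

lemma poch_up: "k \<ge> 1 \<Longrightarrow> pochhammer (a::real) (2 * Suc k - 1) = pochhammer a (2*k - 1) * (a + 2*k - 1) * (a + 2*k)"
proof -
  assume "k \<ge> 1"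
  then obtain m where m: "k = Suc m" by (cases k) auto
  have "2 * Suc k - 1 = Suc (Suc (2*k - 1))" "2*k - 1 = Suc (2*m)" using m by auto
  then show ?thesis by (simp only: pochhammer_Suc) (simp add: m algebra_simps)
qed

lemma poch_down: "k \<ge> 1 \<Longrightarrow> pochhammer (a::real) (2 * Suc k - 1) = a * (a + 1) * pochhammer (a + 2) (2*k - 1)"
proof -
  assume "k \<ge> 1"
  then have "2 * Suc k - 1 = Suc (Suc (2*k - 1))" by simp
  then show ?thesis by (simp only: pochhammer_rec) (simp add: algebra_simps)
qed

lemma L0:
  fixes k :: nat and tt ee w P2 D x uu vv P1 :: real
  assumes "tt \<noteq> 0" "ee \<noteq> 0" "w \<noteq> 0" "P2 \<noteq> 0" "D \<noteq> 0"
  shows "1/2^(Suc k)*tt*x/(D*ee)*(P1*uu* vv)/(P2*tt) = uu* vv/(2*ee*w) * (1/2^k*(w*x)/D*P1/P2)"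
  using assms by (simp add: field_simps)

lemma L1:
  fixes s B0 B1 tt m D ee P1 uu vv P2 h w g f p q Q R :: real
  assumes nz: "tt \<noteq> 0" "ee \<noteq> 0" "w \<noteq> 0" "P2 \<noteq> 0" "D \<noteq> 0" "h \<noteq> 0" "g \<noteq> 0" "f \<noteq> 0"
     "p \<noteq> 0" "q \<noteq> 0" "R \<noteq> 0"
    and Qe: "Q = P1*uu* vv/(p*q)" and Re: "R = P2*h/g"
    and H: "(B0+B1)*tt = B0*h + B1*g"
  shows "(-s)/2^(Suc k)*(B0+B1)*(tt*m)/(D*ee)*(P1*uu* vv)/(P2*h)
     = uu* vv/(2*ee*w)*((-s)/2^k*B0*(w*m)/D*P1/P2) - q*p/(2*ee*f)*(s/2^k*B1*(f*m)/D*Q/R)"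
proof -
  define C where "C = (-s)*m*P1*uu* vv/(2^(Suc k)*D*ee*P2)"
  have 1: "(-s)/2^(Suc k)*(B0+B1)*(tt*m)/(D*ee)*(P1*uu* vv)/(P2*h) = C * ((B0+B1)*tt) / h"
    using nz by (simp add: C_def field_simps)
  have 2: "uu* vv/(2*ee*w)*((-s)/2^k*B0*(w*m)/D*P1/P2) - q*p/(2*ee*f)*(s/2^k*B1*(f*m)/D*Q/R)
       = C*B0 + C*B1*g/h"
    unfolding Qe Re using nz by (simp add: C_def field_simps)
  show ?thesis unfolding 1 2 H using nz by (simp add: field_simps)
qed

lemma coef_rec:
  assumes k: "k \<ge> 1"
  shows "coef_a i n (Suc k) = al k n * coef_a i n k
          - (if i = 0 then 0 else be k (n+2) * coef_a (i - 1) (n+2) k)"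
proof (cases "i = 0")
  case True
  show ?thesis
  proof (cases "n = 0")
    case True then show ?thesis using `i = 0` k by (simp add: coef_a_def al_def)
  next
    case False
    define P1 where "P1 = pochhammer (real n + 1) (2*k - 1)"
    define P2 where "P2 = pochhammer (real n) (k + 1)"
    have e1: "pochhammer (real n + 1) (2 * Suc k - 1) = P1 * (real n + 2*real k) * (real n + 2*real k + 1)"
      using poch_up[OF k, of "real n + 1"] by (simp add: P1_def algebra_simps)
    have e2: "pochhammer (real n + real i) (Suc k + 1) = P2 * (real n + real k + 1)"
      using `i = 0` by (simp add: P2_def pochhammer_Suc algebra_simps)
    have P2: "P2 > 0" using False by (simp add: P2_def pochhammer_pos)
    have D: "dfact_odd k > 0" by (rule dfact_odd_pos)
    have "coef_a i n (Suc k) = (-1)^i / 2^(Suc k) * real (Suc k choose i) * (real (n + Suc k) * real (n + 2*i)) / dfact_odd (Suc k) * pochhammer (real n + 1) (2*Suc k - 1) / pochhammer (real n + real i) (Suc k + 1)"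
      using False by (simp add: coef_a_def)
    also have "\<dots> = 1 / 2^(Suc k) * (real n + real k + 1) * real n / (dfact_odd k * (2*real k+1)) * (P1 * (real n + 2*real k) * (real n + 2*real k + 1)) / (P2 * (real n + real k + 1))"
      by (simp only: e1 e2 dfact_odd_Suc) (insert P2 D, simp add: `i = 0` field_simps)
    finally have lhs: "coef_a i n (Suc k) = 1 / 2^(Suc k) * (real n + real k + 1) * real n / (dfact_odd k * (2*real k+1)) * (P1 * (real n + 2*real k) * (real n + 2*real k + 1)) / (P2 * (real n + real k + 1))" .
    have r1: "coef_a i n k = 1 / 2^k * ((real n + real k) * real n) / dfact_odd k * P1 / P2"
      using False `i = 0` by (simp add: coef_a_def P1_def P2_def)
    have alk: "al k n = (real n + 2*real k) * (real n + 2*real k + 1) / (2 * (2*real k+1) * (real n + real k))"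
      using k by (simp add: al_def algebra_simps)
    have "coef_a i n (Suc k) = al k n * coef_a i n k" unfolding lhs r1 alk
      by (rule L0) (use P2 D k in auto)
    then show ?thesis using `i = 0` by simp
  qed
next
  case False
  then have i: "i \<ge> 1" by simp
  define B0 where "B0 = real (k choose i)"
  define B1 where "B1 = real (k choose (i - 1))"
  have B: "B0 * real i = B1 * (real k + 1 - real i)" using binom_rel[OF i] by (simp add: B0_def B1_def)
  have Bs: "real (Suc k choose i) = B0 + B1"
    using choose_reduce_nat[of "Suc k" i] i by (simp add: B0_def B1_def)
  define P1 where "P1 = pochhammer (real n + 1) (2*k - 1)"
  define Q where "Q = pochhammer (real n + 3) (2*k - 1)"
  define P2 where "P2 = pochhammer (real n + real i) (k + 1)"
  define R where "R = pochhammer (real n + real i + 1) (k + 1)"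
  have e1: "pochhammer (real n + 1) (2 * Suc k - 1) = P1 * (real n + 2*real k) * (real n + 2*real k + 1)"
    using poch_up[OF k, of "real n + 1"] by (simp add: P1_def algebra_simps)
  have e1': "pochhammer (real n + 1) (2 * Suc k - 1) = (real n + 1) * (real n + 2) * Q"
    using poch_down[OF k, of "real n + 1"] by (simp add: Q_def algebra_simps)
  have e2: "pochhammer (real n + real i) (Suc k + 1) = P2 * (real n + real i + real k + 1)"
    by (simp add: P2_def pochhammer_Suc algebra_simps)
  have e2': "pochhammer (real n + real i) (Suc k + 1) = (real n + real i) * R"
    by (simp add: R_def pochhammer_rec algebra_simps)
  have q: "pochhammer (real (n+2) + 1) (2*k - 1) = Q" by (simp add: Q_def algebra_simps)
  have r: "pochhammer (real (n+2) + real (i - 1)) (k + 1) = R" using i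
    by (simp add: R_def algebra_simps of_nat_diff)
  have P2: "P2 > 0" using i by (simp add: P2_def pochhammer_pos)
  have R: "R > 0" using i by (simp add: R_def pochhammer_pos)
  have Qp: "Q > 0" by (simp add: Q_def pochhammer_pos)
  have P1: "P1 > 0" by (simp add: P1_def pochhammer_pos)
  have D: "dfact_odd k > 0" by (rule dfact_odd_pos)
  have sgn: "(-1::real)^i = - ((-1)^(i-1))" using i by (cases i) auto
  have PQ: "P1 * (real n + 2*real k) * (real n + 2*real k + 1) = (real n + 1) * (real n + 2) * Q"
    using e1 e1' by simp
  have PR: "P2 * (real n + real i + real k + 1) = (real n + real i) * R" using e2 e2' by simp
  have "coef_a i n (Suc k) = (-1)^i / 2^(Suc k) * real (Suc k choose i) * (real (n + Suc k) * real (n + 2*i)) / dfact_odd (Suc k) * pochhammer (real n + 1) (2*Suc k - 1) / pochhammer (real n + real i) (Suc k + 1)"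
    using i by (simp add: coef_a_def)
  also have "\<dots> = (-1)^i / 2^(Suc k) * (B0 + B1) * ((real n + real k + 1) * (real n + 2*i))
      / (dfact_odd k * (2*real k+1)) * (P1 * (real n + 2*real k) * (real n + 2*real k + 1)) / (P2 * (real n + real i + real k + 1))"
    by (simp only: Bs e1 e2 dfact_odd_Suc) (insert P2 D, simp add: field_simps)
  finally have lhs: "coef_a i n (Suc k) = (-1)^i / 2^(Suc k) * (B0 + B1) * ((real n + real k + 1) * (real n + 2*i))
      / (dfact_odd k * (2*real k+1)) * (P1 * (real n + 2*real k) * (real n + 2*real k + 1)) / (P2 * (real n + real i + real k + 1))" .
  have r1: "coef_a i n k = (-1)^i / 2^k * B0 * ((real n + real k) * (real n + 2*i)) / dfact_odd k * P1 / P2"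
    using i by (simp add: coef_a_def B0_def P1_def P2_def)
  have "coef_a (i-1) (n+2) k = (-1)^(i-1) / 2^k * real (k choose (i-1)) * (real (n+2 + k) * real (n+2 + 2*(i-1))) / dfact_odd k * pochhammer (real (n+2) + 1) (2*k - 1) / pochhammer (real (n+2) + real (i-1)) (k + 1)"
    by (simp add: coef_a_def)
  also have "\<dots> = (-1)^(i-1) / 2^k * B1 * ((real n + 2 + real k) * (real n + 2*i)) / dfact_odd k * Q / R"
    by (simp only: q r B1_def[symmetric]) (use i in \<open>simp add: of_nat_diff algebra_simps\<close>)
  finally have r2: "coef_a (i-1) (n+2) k = (-1)^(i-1) / 2^k * B1 * ((real n + 2 + real k) * (real n + 2*i)) / dfact_odd k * Q / R" .
  have alk: "al k n = (real n + 2*real k) * (real n + 2*real k + 1) / (2 * (2*real k+1) * (real n + real k))"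
    using k by (simp add: al_def algebra_simps)
  have bek: "be k (n+2) = (real n + 2) * (real n + 1) / (2 * (2*real k+1) * (real n + 2 + real k))"
    by (simp add: be_def algebra_simps)
  have main: "coef_a i n (Suc k) = al k n * coef_a i n k - be k (n+2) * coef_a (i - 1) (n+2) k"
    unfolding lhs r1 r2 alk bek sgn
  proof (rule L1)
    show "Q = P1 * (real n + 2*real k) * (real n + 2*real k + 1) / ((real n + 1) * (real n + 2))"
    proof -
      have nz: "(real n + 1) * (real n + 2) \<noteq> 0" by simp
      show ?thesis unfolding PQ using nz by simp
    qed
    show "R = P2 * (real n + real i + real k + 1) / (real n + real i)"
    proof -
      have nz: "real n + real i \<noteq> 0" using i by simp
      show ?thesis unfolding PR using nz by simp
    qed
    show "(B0 + B1) * (real n + real k + 1) = B0 * (real n + real i + real k + 1) + B1 * (real n + real i)"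
      using B by (simp add: algebra_simps)
  qed (use i P2 R D k in auto)
  then show ?thesis using False by simp
qed

lemma coef_base: "coef_a i n 1 = ac 1 i n"
proof -
  consider "i = 0" | "i = 1" | "i \<ge> 2" by linarith
  then show ?thesis
  proof cases
    case 1
    show ?thesis
    proof (cases "n = 0")
      case True then show ?thesis using 1 by (simp add: coef_a_def al_def)
    next
      case False
      have "pochhammer (real n) (Suc (Suc 0)) = real n * (real n + 1)" by (simp add: pochhammer_Suc)
      moreover have "real n > 0" using False by simp
      moreover have "2 * real n + 2 \<noteq> 0" by simp
      ultimately show ?thesis using 1 False by (simp add: coef_a_def al_def dfact_odd_def) (simp add: field_simps)
    qed
  next
    case 2
    have "pochhammer (real n + 1) (Suc (Suc 0)) = (real n + 1) * (real n + 2)" by (simp add: pochhammer_Suc algebra_simps)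
    then show ?thesis using 2 by (simp add: coef_a_def be_def dfact_odd_def) (simp add: algebra_simps)
  next
    case 3
    then show ?thesis by (simp add: coef_a_def ac_zero)
  qed
qed

lemma coef_ac: "k \<ge> 1 \<Longrightarrow> coef_a i n k = ac k i n"
proof (induction k arbitrary: i n rule: dec_induct)
  case base then show ?case by (rule coef_base)
next
  case (step k) then show ?case by (simp add: coef_rec)
qed



definition ge :: "real \<Rightarrow> nat \<Rightarrow> nat \<Rightarrow> real" where
  "ge lam N m = (-1)^m * pochhammer lam (N - m) / (fact m * fact (N - 2*m))"

lemma geg_alt: "gegenbauer lam n x = (\<Sum>m\<le>n div 2. ge lam n m * (2*x)^(n - 2*m))"
  by (simp add: gegenbauer_def ge_def)

lemma tw_alg:
  fixes q fm F a lam s A :: real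
  assumes "q > 0" "fm > 0" "F > 0"
  shows "(a + q + 1 + lam) * ((-s) * lam * A / (q * fm * F)) = lam * ((-s) * A * (lam+1+a) / (q * fm * F) - s * A / (fm * F))"
  using assms by (simp add: field_simps)

lemma tw4:
  assumes "m \<le> N div 2" "N \<ge> 2"
  shows "(real N + lam) * ge lam N m = lam * (ge (lam+1) N m - (if m = 0 then 0 else ge (lam+1) (N-2) (m-1)))"
proof -
  define a where "a = N - m - 1"
  have Na: "N - m = Suc a" using assms unfolding a_def by (simp add: Suc_diff_Suc)
  define A where "A = pochhammer (lam+1) a"
  have p1: "pochhammer lam (N - m) = lam * A" by (simp add: Na A_def pochhammer_rec)
  have p2: "pochhammer (lam+1) (N - m) = A * (lam + 1 + real a)" by (simp add: Na A_def pochhammer_Suc)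
  have Nr: "real N = real a + real m + 1" using Na by linarith
  show ?thesis
  proof (cases m)
    case 0
    have q: "pochhammer lam N = lam * A" "pochhammer (lam+1) N = A * (lam + 1 + real a)"
      using p1 p2 0 by simp_all
    show ?thesis using 0 by (simp add: ge_def q Nr divide_simps)
  next
    case (Suc m')
    have e1: "N - 2 - m' = a" "N - Suc (Suc m') = a" using Na Suc by simp_all
    have e2: "N - 2 - 2*m' = N - 2*m" using Suc assms by simp
    have f: "fact m = real (Suc m') * fact m'" using Suc by simp
    define F where "F = (fact (N - 2*m) :: real)"
    have "F > 0" by (simp add: F_def)
    have p1s: "pochhammer lam (N - Suc m') = lam * A" "pochhammer (lam+1) (N - Suc m') = A * (lam + 1 + real a)"
      using p1 p2 Suc by simp_all
    have g1: "ge lam N m = (-((-1)^m')) * lam * A / (real (Suc m') * fact m' * F)" by (simp add: ge_def p1s F_def f Suc)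
    have g2: "ge (lam+1) N m = (-((-1)^m')) * A * (lam + 1 + real a) / (real (Suc m') * fact m' * F)"
      by (simp add: ge_def p1s F_def f Suc)
    have g3: "ge (lam+1) (N-2) (m-1) = (-1)^m' * A / (fact m' * F)"
      using Suc by (simp add: ge_def e1 e2 A_def F_def)
    have Nr': "real N = real a + real (Suc m') + 1" using Nr Suc by simp
    have ifm: "(if m = 0 then 0 else (-1)^m' * A / (fact m' * F)) = (-1)^m' * A / (fact m' * F)" using Suc by simp
    show ?thesis unfolding g1 g2 g3 Nr' ifm by (rule tw_alg) (use `F > 0` in auto)
  qed
qed

lemma geg_lam:
  assumes "N \<ge> 2"
  shows "(real N + lam) * gegenbauer lam N x = lam * (gegenbauer (lam+1) N x - gegenbauer (lam+1) (N-2) x)"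
proof -
  obtain M where M: "N = Suc (Suc M)" using assms by (metis add_2_eq_Suc le_Suc_ex)
  have K: "N div 2 = Suc (M div 2)" using M by simp
  have sh: "gegenbauer (lam+1) (N-2) x = (\<Sum>m\<le>N div 2. (if m = 0 then 0 else ge (lam+1) (N-2) (m-1)) * (2*x)^(N - 2*m))"
    unfolding K geg_alt sum.atMost_Suc_shift using M by simp
  have "(real N + lam) * gegenbauer lam N x = (\<Sum>m\<le>N div 2. ((real N + lam) * ge lam N m) * (2*x)^(N - 2*m))"
    by (simp add: geg_alt sum_distrib_left mult.assoc)
  also have "\<dots> = (\<Sum>m\<le>N div 2. (lam * (ge (lam+1) N m - (if m = 0 then 0 else ge (lam+1) (N-2) (m-1)))) * (2*x)^(N - 2*m))"
    by (rule sum.cong) (use tw4 assms in auto)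
  also have "\<dots> = lam * (gegenbauer (lam+1) N x - gegenbauer (lam+1) (N-2) x)"
    unfolding sh geg_alt[of "lam+1" N] by (simp add: sum_distrib_left sum_subtractf algebra_simps)
  finally show ?thesis .
qed


definition ge' :: "real \<Rightarrow> nat \<Rightarrow> nat \<Rightarrow> real" where
  "ge' lam N m = (-1)^m * pochhammer lam (N - 1 - m) * real (N - 2*m) / (fact m * fact (N - 2*m))"

lemma tw_alg3:
  fixes q fm F a lam s A :: real
  assumes "q > 0" "fm > 0" "F > 0"
  shows "(a+q+1)*((-s)*A*(lam+a)/(q*fm*F)) = ((a+q+1)+lam-1)*((-s)*A*((a+q+1)-2*q)/(q*fm*F)) - ((a+q+1)+2*lam-2)*(s*A/(fm*F))"
  using assms by (simp add: field_simps)

lemma tw1: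
  assumes "m \<le> N div 2" "N \<ge> 2"
  shows "real N * ge lam N m = (real N + lam - 1) * ge' lam N m - (real N + 2*lam - 2) * (if m = 0 then 0 else ge lam (N-2) (m-1))"
proof -
  define a where "a = N - 1 - m"
  have Na: "N - m = Suc a" using assms unfolding a_def by (simp add: Suc_diff_Suc)
  define A where "A = pochhammer lam a"
  have p1: "pochhammer lam (N - m) = A * (lam + real a)" by (simp add: Na A_def pochhammer_Suc)
  have Nr: "real N = real a + real m + 1" using Na by linarith
  have N2: "real (N - 2*m) = real N - 2 * real m" using assms by (simp add: of_nat_diff)
  show ?thesis
  proof (cases m)
    case 0
    have q: "pochhammer lam N = A * (lam + real a)" "pochhammer lam (N - 1) = A" "N - 1 = a" "pochhammer lam (N - Suc 0) = A"
      using p1 0 by (simp_all add: a_def A_def)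
    have fN: "(fact N :: real) > 0" by simp
    show ?thesis using 0 fN by (simp add: ge_def ge'_def q Nr divide_simps)
  next
    case (Suc m')
    have e1: "N - 2 - m' = a" "N - Suc (Suc m') = a" "N - 1 - m = a" using Na Suc by (simp_all add: a_def)
    have e2: "N - 2 - 2*m' = N - 2*m" using Suc assms by simp
    have f: "fact m = real (Suc m') * fact m'" using Suc by simp
    define F where "F = (fact (N - 2*m) :: real)"
    have "F > 0" by (simp add: F_def)
    have p1s: "pochhammer lam (N - Suc m') = A * (lam + real a)" using p1 Suc by simp
    have g1: "ge lam N m = (-((-1)^m')) * A * (lam + real a) / (real (Suc m') * fact m' * F)"
      by (simp add: ge_def p1s F_def f Suc)
    have g2: "ge' lam N m = (-((-1)^m')) * A * ((real a + real (Suc m') + 1) - 2 * real (Suc m')) / (real (Suc m') * fact m' * F)"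
      using N2 Nr Suc by (simp add: ge'_def e1 A_def F_def f)
    have g3: "ge lam (N-2) (m-1) = (-1)^m' * A / (fact m' * F)"
      using Suc by (simp add: ge_def e1 e2 A_def F_def)
    have Nr': "real N = real a + real (Suc m') + 1" using Nr Suc by simp
    have ifm: "(if m = 0 then 0 else (-1)^m' * A / (fact m' * F)) = (-1)^m' * A / (fact m' * F)" using Suc by simp
    show ?thesis unfolding g1 g2 g3 Nr' ifm by (rule tw_alg3) (use `F > 0` in auto)
  qed
qed

lemma geg_shift1:
  assumes "N \<ge> 2"
  shows "2 * x * gegenbauer lam (N-1) x = (\<Sum>m\<le>N div 2. ge' lam N m * (2*x)^(N - 2*m))"
proof -
  have "2 * x * gegenbauer lam (N-1) x = (\<Sum>m\<le>(N-1) div 2. ge lam (N-1) m * (2*x)^(N - 2*m))"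
    unfolding geg_alt sum_distrib_left
  proof (rule sum.cong)
    fix m assume "m \<in> {..(N-1) div 2}"
    then have "N - 2*m = Suc (N - 1 - 2*m)" using assms by auto
    then show "2 * x * (ge lam (N - 1) m * (2 * x) ^ (N - 1 - 2 * m)) = ge lam (N - 1) m * (2 * x) ^ (N - 2 * m)"
      by (simp add: algebra_simps)
  qed simp
  also have "\<dots> = (\<Sum>m\<le>N div 2. ge' lam N m * (2*x)^(N - 2*m))"
  proof (rule sum.mono_neutral_cong_left)
    show "\<forall>i\<in>{..N div 2} - {..(N - 1) div 2}. ge' lam N i * (2 * x) ^ (N - 2 * i) = 0"
    proof
      fix i assume "i \<in> {..N div 2} - {..(N - 1) div 2}"
      then have "N - 2*i = 0" by auto
      then show "ge' lam N i * (2 * x) ^ (N - 2 * i) = 0" by (simp add: ge'_def)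
    qed
    fix m assume m: "m \<in> {..(N - 1) div 2}"
    then have d: "N - 2*m = Suc (N - 1 - 2*m)" using assms by auto
    have "ge lam (N - 1) m = ge' lam N m"
      unfolding ge_def ge'_def d fact_Suc using d by (simp add: field_simps)
    then show "ge lam (N - 1) m * (2 * x) ^ (N - 2 * m) = ge' lam N m * (2 * x) ^ (N - 2 * m)" by simp
  qed auto
  finally show ?thesis .
qed

lemma geg_rec:
  assumes "N \<ge> 2"
  shows "real N * gegenbauer lam N x = (real N + lam - 1) * (2 * x * gegenbauer lam (N-1) x) - (real N + 2*lam - 2) * gegenbauer lam (N-2) x"
proof -
  obtain M where M: "N = Suc (Suc M)" using assms by (metis add_2_eq_Suc le_Suc_ex)
  have K: "N div 2 = Suc (M div 2)" using M by simp
  have sh: "gegenbauer lam (N-2) x = (\<Sum>m\<le>N div 2. (if m = 0 then 0 else ge lam (N-2) (m-1)) * (2*x)^(N - 2*m))"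
    unfolding K geg_alt sum.atMost_Suc_shift using M by simp
  have "real N * gegenbauer lam N x = (\<Sum>m\<le>N div 2. (real N * ge lam N m) * (2*x)^(N - 2*m))"
    by (simp add: geg_alt sum_distrib_left mult.assoc)
  also have "\<dots> = (\<Sum>m\<le>N div 2. ((real N + lam - 1) * ge' lam N m - (real N + 2*lam - 2) * (if m = 0 then 0 else ge lam (N-2) (m-1))) * (2*x)^(N - 2*m))"
    by (rule sum.cong) (use tw1 assms in auto)
  also have "\<dots> = (real N + lam - 1) * (2 * x * gegenbauer lam (N-1) x) - (real N + 2*lam - 2) * gegenbauer lam (N-2) x"
    unfolding sh geg_shift1[OF assms] by (simp add: sum_distrib_left sum_subtractf left_diff_distrib mult.assoc)
  finally show ?thesis .
qed

lemma geg_0: "gegenbauer lam 0 x = 1" by (simp add: gegenbauer_def)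
lemma geg_1: "gegenbauer lam 1 x = 2 * lam * x" by (simp add: gegenbauer_def)


lemma geg_at1: "gegenbauer lam N 1 = pochhammer (2*lam) N / fact N"
proof (induction N rule: less_induct)
  case (less N)
  show ?case
  proof (cases "N < 2")
    case True
    then consider "N = 0" | "N = 1" by linarith
    then show ?thesis by cases (simp_all add: gegenbauer_def)
  next
    case False
    then obtain M where M: "N = Suc (Suc M)" by (metis add_2_eq_Suc le_Suc_ex not_less)
    have r: "real N * gegenbauer lam N 1 = (real N + lam - 1) * (2 * gegenbauer lam (N-1) 1) - (real N + 2*lam - 2) * gegenbauer lam (N-2) 1"
      using geg_rec[of N lam 1] False by simp
    define P where "P = pochhammer (2*lam) M"
    have i1: "gegenbauer lam (N-1) 1 = P * (2*lam + real M) / ((real M + 1) * fact M)"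
      using less.IH[of "N-1"] M by (simp add: P_def pochhammer_Suc algebra_simps)
    have i2: "gegenbauer lam (N-2) 1 = P / fact M"
      using less.IH[of "N-2"] M by (simp add: P_def)
    have fM: "(fact M::real) > 0" by simp
    have "real N * gegenbauer lam N 1 = real N * (P * (2*lam + real M) * (2*lam + real M + 1) / ((real M + 2) * (real M + 1) * fact M))"
    proof -
      have nz: "real M + 1 \<noteq> 0" "real M + 2 \<noteq> 0" "real N = real M + 2" using M by auto
      show ?thesis unfolding r i1 i2 using fM nz by (simp add: divide_simps) (simp add: algebra_simps)
    qed
    moreover have NZ: "real N \<noteq> 0" using M by simp
    ultimately have "gegenbauer lam N 1 = P * (2*lam + real M) * (2*lam + real M + 1) / ((real M + 2) * (real M + 1) * fact M)"
      using mult_left_cancel[OF NZ] by blast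
    also have "\<dots> = pochhammer (2*lam) N / fact N"
      using M by (simp add: P_def pochhammer_Suc algebra_simps)
    finally show ?thesis .
  qed
qed


lemma U_rec: "N \<ge> 2 \<Longrightarrow> gegenbauer 1 N x = 2 * x * gegenbauer 1 (N-1) x - gegenbauer 1 (N-2) x"
proof -
  assume N: "N \<ge> 2"
  have "real N * gegenbauer 1 N x = real N * (2 * x * gegenbauer 1 (N-1) x - gegenbauer 1 (N-2) x)"
    using geg_rec[OF N, of 1 x] by (simp add: algebra_simps)
  then show ?thesis using N by simp
qed

lemma U_diff: "gegenbauer 1 (N+2) (cos t) - gegenbauer 1 N (cos t) = 2 * cos (real (N+2) * t)"
proof (induction N rule: less_induct)
  case (less N)
  define U where "U n = gegenbauer 1 n (cos t)" for n
  have U0: "U 0 = 1" and U1: "U 1 = 2 * cos t" by (simp_all add: U_def gegenbauer_def)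
  have Ur: "U n = 2 * cos t * U (n-1) - U (n-2)" if "n \<ge> 2" for n
    using U_rec[OF that] by (simp add: U_def)
  have U2: "U 2 = 4 * (cos t)^2 - 1" using Ur[of 2] U0 U1 by (simp add: power2_eq_square)
  have c2: "cos (2 * t) = 2 * (cos t)^2 - 1" by (rule cos_double_cos)
  have pts: "cos t * cos (a * t) = (cos ((a - 1) * t) + cos ((a + 1) * t)) / 2" for a
    using cos_times_cos[of "a * t" t] by (simp add: algebra_simps)
  show ?case
  proof (cases "N < 2")
    case True
    then consider "N = 0" | "N = 1" by linarith
    then show ?thesis
    proof cases
      case 1
      then show ?thesis using U2 U0 c2 by (simp add: U_def[symmetric] numeral_2_eq_2)
    next
      case 2
      have U3: "U 3 = 2 * cos t * U 2 - U 1" using Ur[of 3] by simp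
      have "cos t * cos (2 * t) = (cos t + cos (3 * t)) / 2" using pts[of 2] by simp
      then have c3: "cos (3 * t) = 2 * cos t * cos (2*t) - cos t" by simp
      have e3: "U 3 = 8*(cos t)^3 - 4*cos t" using U3 U2 U1 by (simp add: power2_eq_square power3_eq_cube algebra_simps)
      have e4: "cos (3*t) = 4*(cos t)^3 - 3*cos t" unfolding c3 c2 by (simp add: power2_eq_square power3_eq_cube algebra_simps)
      have "U 3 - U 1 = 2*cos(3*t)" using e3 e4 U1 by (simp add: algebra_simps)
      then show ?thesis using 2 by (simp add: U_def numeral_3_eq_3)
    qed
  next
    case False
    have ih1: "U (N+1) - U (N-1) = 2 * cos (real (N+1) * t)"
      using less.IH[of "N-1"] False by (simp add: U_def)
    have ih2: "U N - U (N-2) = 2 * cos (real N * t)"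
    proof -
      have NN: "Suc (Suc (N - 2)) = N" "N - 2 + 2 = N" using False by simp_all
      show ?thesis using less.IH[of "N-2"] False by (simp only: NN U_def)
    qed
    have r1: "U (N+2) = 2 * cos t * U (N+1) - U N" using Ur[of "N+2"] by simp
    have r2: "U N = 2 * cos t * U (N-1) - U (N-2)" using Ur[of N] False by simp
    have "U (N+2) - U N = 2 * cos t * (U (N+1) - U (N-1)) - (U N - U (N-2))"
      using r1 r2 by (simp add: algebra_simps)
    also have "\<dots> = 4 * (cos t * cos (real (N+1) * t)) - 2 * cos (real N * t)"
      unfolding ih1 ih2 by simp
    also have "\<dots> = 2 * cos (real (N+2) * t)"
      unfolding pts by (simp add: algebra_simps)
    finally show ?thesis by (simp add: U_def)
  qed
qed


lemma c1_val: "gegenbauer 1 N 1 = real N + 1"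
proof -
  have "pochhammer (2::real) N = pochhammer 1 (Suc N)" by (simp add: pochhammer_rec)
  also have "\<dots> = fact (Suc N)" by (simp add: pochhammer_fact)
  finally have "pochhammer (2::real) N = fact (Suc N)" .
  then show ?thesis by (simp add: geg_at1)
qed

lemma c_pos: "lam > 0 \<Longrightarrow> gegenbauer lam N 1 > 0"
  by (simp add: geg_at1 pochhammer_pos)

definition Gb :: "nat \<Rightarrow> nat \<Rightarrow> real \<Rightarrow> real" where
  "Gb j N t = (if j = 0 then cos (real N * t) else gegenbauer (real j) N (cos t) / gegenbauer (real j) N 1)"

lemma Gb_small: "N < 2 \<Longrightarrow> Gb j N t = al j N * Gb (Suc j) N t"
proof -
  assume "N < 2"
  then consider "N = 0" | "N = 1" by linarith
  then show ?thesis
  proof cases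
    case 1 then show ?thesis by (simp add: Gb_def al_def gegenbauer_def)
  next
    case 2
    have nz: "real j + 1 \<noteq> 0" "2 * real j + 1 \<noteq> 0" by auto
    have "al j 1 = 1" using nz by (simp add: al_def divide_simps) (simp add: algebra_simps)
    moreover have "Gb j 1 t = cos t" "Gb (Suc j) 1 t = cos t"
      using nz by (auto simp add: Gb_def gegenbauer_def divide_simps)
    ultimately show ?thesis using 2 by simp
  qed
qed

lemma Gb_big:
  assumes N: "N \<ge> 2"
  shows "Gb j N t = al j N * Gb (Suc j) N t - be j N * Gb (Suc j) (N-2) t"
proof -
  obtain M where M: "N = M + 2" using N by (metis add.commute le_Suc_ex)
  show ?thesis
  proof (cases "j = 0")
    case True
    have a0: "al 0 N = (real N + 1) / 2" "be 0 N = (real N - 1) / 2" using N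
      by (simp_all add: al_def be_def)
    have "Gb 1 N t = gegenbauer 1 N (cos t) / (real N + 1)" "Gb 1 (N-2) t = gegenbauer 1 (N-2) (cos t) / (real N - 1)"
      using N by (simp_all add: Gb_def c1_val of_nat_diff)
    moreover have "gegenbauer 1 N (cos t) - gegenbauer 1 (N-2) (cos t) = 2 * cos (real N * t)"
      using U_diff[of M t] M by simp
    moreover have "real N + 1 \<noteq> 0" "real N - 1 \<noteq> 0" using N by auto
    moreover have "Gb 0 N t = cos (real N * t)" by (simp add: Gb_def)
    ultimately show ?thesis using True by (simp add: a0 divide_simps) (simp add: algebra_simps)
  next
    case False
    define y where "y = real j"
    have y: "y \<ge> 1" using False by (simp add: y_def)
    define m where "m = real M"
    have m: "m \<ge> 0" by (simp add: m_def)
    define P where "P = pochhammer (2*y+2) M"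
    have P: "P > 0" using y by (simp add: P_def pochhammer_pos)
    define F where "F = (fact M :: real)"
    have F: "F > 0" by (simp add: F_def)
    have fN: "(fact N :: real) = (m+2)*(m+1)*F" by (simp add: M m_def F_def algebra_simps)
    have cj: "gegenbauer y N 1 = 2*y*(2*y+1)*P / ((m+2)*(m+1)*F)"
      unfolding geg_at1 fN by (simp add: M P_def pochhammer_rec numeral_2_eq_2 algebra_simps)
    have cj1: "gegenbauer (y+1) N 1 = P*(2*y+2+m)*(2*y+3+m) / ((m+2)*(m+1)*F)"
      unfolding geg_at1 fN by (simp add: M P_def m_def pochhammer_Suc numeral_2_eq_2 algebra_simps)
    have cm: "gegenbauer (y+1) (N-2) 1 = P / F"
      unfolding geg_at1 by (simp add: M P_def F_def algebra_simps)
    define A where "A = gegenbauer y N (cos t)"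
    define B where "B = gegenbauer (y+1) N (cos t)"
    define C where "C = gegenbauer (y+1) (N-2) (cos t)"
    have rel: "((m+2)+y) * A = y * (B - C)"
      using geg_lam[OF N, of y "cos t"] by (simp add: A_def B_def C_def M m_def add_ac)
    have Ae: "A = y * (B - C) / ((m+2)+y)" using rel y m by (simp add: field_simps)
    have g1: "Gb j N t = A / (2*y*(2*y+1)*P / ((m+2)*(m+1)*F))"
      using False by (simp add: Gb_def A_def cj[unfolded y_def] y_def)
    have ys: "real (Suc j) = y + 1" by (simp add: y_def)
    have g2: "Gb (Suc j) N t = B / (P*(2*y+2+m)*(2*y+3+m) / ((m+2)*(m+1)*F))"
      by (simp only: Gb_def ys cj1 B_def[symmetric] nat.distinct if_False)
    have g3: "Gb (Suc j) (N-2) t = C / (P / F)"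
      by (simp only: Gb_def ys cm C_def[symmetric] nat.distinct if_False)
    have al: "al j N = ((m+2)+2*y)*((m+2)+2*y+1)/(2*(2*y+1)*((m+2)+y))"
      using False by (simp add: al_def M m_def y_def algebra_simps)
    have be: "be j N = (m+2)*((m+2)-1)/(2*(2*y+1)*((m+2)+y))"
      by (simp add: be_def M m_def y_def algebra_simps)
    have nz: "m + 2 \<noteq> 0" "m + 1 \<noteq> 0" "2*y+1 \<noteq> 0" "m+2+y \<noteq> 0" "2*y+2+m \<noteq> 0" "2*y+3+m \<noteq> 0"
      "y \<noteq> 0" "P \<noteq> 0" "F \<noteq> 0"
      using y m P F by auto
    show ?thesis unfolding g1 g2 g3 al be Ae using nz
      by (simp add: divide_simps) (simp add: algebra_simps)
  qed
qed

lemma Gb_expand: "N \<le> M \<Longrightarrow> Gb j N t = (\<Sum>m\<le>M. gc j N m * cos (real m * t))"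
proof (induction j arbitrary: N M)
  case 0
  have "(\<Sum>m\<le>M. gc 0 N m * cos (real m * t)) = (\<Sum>m\<le>M. if m = N then cos (real m * t) else 0)"
    by (rule sum.cong) auto
  also have "\<dots> = cos (real N * t)" using 0 by simp
  finally show ?case by (simp add: Gb_def)
next
  case (Suc j)
  show ?case using Suc.prems
  proof (induction N arbitrary: M rule: less_induct)
    case (less N)
    have alnz: "al j N \<noteq> 0" using al_pos[of j N] by simp
    show ?case
    proof (cases "N < 2")
      case True
      have "Gb (Suc j) N t = Gb j N t / al j N" using Gb_small[OF True, of j t] alnz by simp
      also have "\<dots> = (\<Sum>m\<le>M. gc j N m * cos (real m * t)) / al j N" using Suc.IH less.prems by simp
      also have "\<dots> = (\<Sum>m\<le>M. gc (Suc j) N m * cos (real m * t))"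
        unfolding gc.simps(2)[of j N] using True by (simp add: sum_divide_distrib)
      finally show ?thesis .
    next
      case False
      have "Gb (Suc j) N t = (Gb j N t + be j N * Gb (Suc j) (N-2) t) / al j N"
        using Gb_big[of N j t] False alnz by (simp add: field_simps)
      also have "\<dots> = ((\<Sum>m\<le>M. gc j N m * cos (real m * t)) + be j N * (\<Sum>m\<le>M. gc (Suc j) (N-2) m * cos (real m * t))) / al j N"
        using Suc.IH less.prems less.IH[of "N-2" M] False by simp
      also have "\<dots> = (\<Sum>m\<le>M. gc (Suc j) N m * cos (real m * t))"
        unfolding gc.simps(2)[of j N] using False
        by (simp add: sum_divide_distrib sum_distrib_left sum.distrib add_divide_distrib algebra_simps)
      finally show ?thesis .
    qed
  qed
qed



lemma int_cos: "((\<lambda>t. cos (a * t)) has_integral (if a = 0 then pi else sin (a*pi)/a)) {0..pi}"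
proof (cases "a = 0")
  case True
  then show ?thesis using has_integral_const_real[of "1::real" 0 pi] by simp
next
  case False
  have d: "((\<lambda>t. sin (a*t)/a) has_vector_derivative cos (a*x)) (at x within {0..pi})" for x
  proof -
    have "((\<lambda>t. sin (a*t)/a) has_real_derivative cos (a*x)) (at x within {0..pi})"
      using False by (auto intro!: derivative_eq_intros)
    then show ?thesis by (simp add: has_real_derivative_iff_has_vector_derivative)
  qed
  have "((\<lambda>t. cos (a * t)) has_integral (sin (a*pi)/a - sin (a*0)/a)) {0..pi}"
    by (rule fundamental_theorem_of_calculus) (use d in auto)
  then show ?thesis using False by simp
qed

definition wt :: "nat \<Rightarrow> real" where "wt n = (if n = 0 then pi else pi/2)"

lemma int_cc: "((\<lambda>t. cos (real m * t) * cos (real n * t)) has_integral (if m = n then wt n else 0)) {0..pi}"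
proof -
  define a1 where "a1 = real m - real n"
  define a2 where "a2 = real m + real n"
  have s1: "sin (a1 * pi) = 0" unfolding a1_def left_diff_distrib sin_diff by (simp add: sin_npi)
  have s2: "sin (a2 * pi) = 0" unfolding a2_def distrib_right sin_add by (simp add: sin_npi)
  have eq: "cos (real m * t) * cos (real n * t) = cos (a1 * t) * (1/2) + cos (a2 * t) * (1/2)" for t
    unfolding cos_times_cos a1_def a2_def by (simp add: algebra_simps add_divide_distrib)
  have i1: "((\<lambda>t. cos (a1 * t) * (1/2)) has_integral (if a1 = 0 then pi else 0) * (1/2)) {0..pi}"
    using has_integral_mult_left[OF int_cos[of a1], of "1/2"] s1 by (simp split: if_splits)
  have i2: "((\<lambda>t. cos (a2 * t) * (1/2)) has_integral (if a2 = 0 then pi else 0) * (1/2)) {0..pi}"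
    using has_integral_mult_left[OF int_cos[of a2], of "1/2"] s2 by (simp split: if_splits)
  have "((\<lambda>t. cos (real m * t) * cos (real n * t)) has_integral ((if a1 = 0 then pi else 0) * (1/2) + (if a2 = 0 then pi else 0) * (1/2))) {0..pi}"
    unfolding eq by (rule has_integral_add[OF i1 i2])
  moreover have "((if a1 = 0 then pi else 0) * (1/2) + (if a2 = 0 then pi else 0) * (1/2)) = (if m = n then wt n else 0)"
    by (auto simp: a1_def a2_def wt_def)
  ultimately show ?thesis by simp
qed

lemma lint_cc: "integral\<^sup>L (lebesgue_on {0..pi}) (\<lambda>t. cos (real m * t) * cos (real n * t)) = (if m = n then wt n else 0)"
proof -
  have "integrable (lebesgue_on {0..pi}) (\<lambda>t. cos (real m * t) * cos (real n * t))"
    by (intro continuous_imp_integrable_real continuous_intros)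
  then have "integral\<^sup>L (lebesgue_on {0..pi}) (\<lambda>t. cos (real m * t) * cos (real n * t)) = integral {0..pi} (\<lambda>t. cos (real m * t) * cos (real n * t))"
    by (rule lebesgue_integral_eq_integral) simp
  also have "\<dots> = (if m = n then wt n else 0)" by (rule integral_unique[OF int_cc])
  finally show ?thesis .
qed

lemma int_series:
  fixes c :: "nat \<Rightarrow> real" and \<phi> :: "nat \<Rightarrow> real \<Rightarrow> real"
  assumes sc: "summable (\<lambda>i. \<bar>c i\<bar>)"
   and cont: "\<And>i. continuous_on {0..pi} (\<phi> i)"
   and bd: "\<And>i t. t \<in> {0..pi} \<Longrightarrow> \<bar>\<phi> i t\<bar> \<le> 1"
   and sm: "\<And>t. t \<in> {0..pi} \<Longrightarrow> (\<lambda>i. c i * \<phi> i t) sums f t"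
   and gcont: "continuous_on {0..pi} g" and gb: "\<And>t. t \<in> {0..pi} \<Longrightarrow> \<bar>g t\<bar> \<le> 1"
  shows "(\<lambda>i. c i * integral\<^sup>L (lebesgue_on {0..pi}) (\<lambda>t. \<phi> i t * g t)) sums integral\<^sup>L (lebesgue_on {0..pi}) (\<lambda>t. f t * g t)"
proof -
  define M where "M = lebesgue_on {0..pi::real}"
  define F where "F i t = c i * (\<phi> i t * g t)" for i t
  have intF: "integrable M (F i)" for i
    unfolding M_def F_def by (intro continuous_imp_integrable_real continuous_intros cont gcont)
  have intpg: "integrable M (\<lambda>t. \<phi> i t * g t)" for i
    unfolding M_def by (intro continuous_imp_integrable_real continuous_intros cont gcont)
  have Fb: "norm (F i t) \<le> \<bar>c i\<bar>" if "t \<in> {0..pi}" for i t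
  proof -
    have "\<bar>\<phi> i t * g t\<bar> \<le> 1" using bd[OF that, of i] gb[OF that] by (simp add: abs_mult mult_le_one)
    then show ?thesis unfolding F_def by (simp add: abs_mult mult_left_le)
  qed
  have ae: "AE t in M. summable (\<lambda>i. norm (F i t))"
  proof (rule AE_I2)
    fix t assume "t \<in> space M"
    then have "t \<in> {0..pi}" by (simp add: M_def)
    show "summable (\<lambda>i. norm (F i t))"
      by (rule summable_comparison_test[OF _ sc]) (use Fb[OF \<open>t \<in> {0..pi}\<close>] in auto)
  qed
  have nF: "(LINT t|M. norm (F i t)) = \<bar>c i\<bar> * (LINT t|M. norm (\<phi> i t * g t))" for i
    unfolding F_def by (simp add: abs_mult integral_mult_right_zero)
  define C where "C = (LINT t|M. (1::real))"
  have int1: "integrable M (\<lambda>t. 1::real)" unfolding M_def by (intro continuous_imp_integrable_real continuous_intros)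
  have LC: "(LINT t|M. norm (\<phi> i t * g t)) \<le> C" for i
    unfolding C_def
  proof (rule integral_mono[OF _ int1])
    show "integrable M (\<lambda>t. norm (\<phi> i t * g t))" using intpg by (rule integrable_norm)
    fix t assume "t \<in> space M"
    then have t: "t \<in> {0..pi}" by (simp add: M_def)
    show "norm (\<phi> i t * g t) \<le> 1" using bd[OF t, of i] gb[OF t] by (simp add: abs_mult mult_le_one)
  qed
  have sI: "summable (\<lambda>i. LINT t|M. norm (F i t))"
    unfolding nF
  proof (rule summable_comparison_test[OF _ summable_mult2[OF sc, of C]])
    show "\<exists>N. \<forall>n\<ge>N. norm (\<bar>c n\<bar> * (LINT t|M. norm (\<phi> n t * g t))) \<le> \<bar>c n\<bar> * C"
    proof (intro exI allI impI)
      fix n :: nat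
      have "0 \<le> (LINT t|M. norm (\<phi> n t * g t))" by (rule integral_nonneg_AE) simp
      then show "norm (\<bar>c n\<bar> * (LINT t|M. norm (\<phi> n t * g t))) \<le> \<bar>c n\<bar> * C"
        using LC[of n] by (simp add: abs_mult mult_left_mono)
    qed
  qed
  have eq1: "(LINT t|M. (\<Sum>i. F i t)) = (\<Sum>i. integral\<^sup>L M (F i))"
    by (rule integral_suminf[OF intF ae sI])
  have eq2: "(LINT t|M. f t * g t) = (LINT t|M. (\<Sum>i. F i t))"
  proof (rule Bochner_Integration.integral_cong[OF refl])
    fix t assume "t \<in> space M"
    then have t: "t \<in> {0..pi}" by (simp add: M_def)
    have "f t * g t = (\<Sum>i. c i * \<phi> i t) * g t" using sums_unique[OF sm[OF t]] by simp
    also have "\<dots> = (\<Sum>i. c i * \<phi> i t * g t)"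
      by (rule suminf_mult2) (use sm[OF t] in \<open>simp add: sums_summable\<close>)
    finally show "f t * g t = (\<Sum>i. F i t)" by (simp add: F_def mult.assoc)
  qed
  have sInt: "summable (\<lambda>i. integral\<^sup>L M (F i))"
  proof (rule summable_comparison_test[OF _ sI])
    show "\<exists>N. \<forall>n\<ge>N. norm (integral\<^sup>L M (F n)) \<le> (LINT t|M. norm (F n t))"
      by (auto intro: integral_norm_bound)
  qed
  have iF: "integral\<^sup>L M (F i) = c i * integral\<^sup>L M (\<lambda>t. \<phi> i t * g t)" for i
    unfolding F_def by (rule integral_mult_right_zero)
  have "(\<lambda>i. integral\<^sup>L M (F i)) sums (LINT t|M. f t * g t)"
    unfolding eq2 eq1 by (rule summable_sums[OF sInt])
  then have "(\<lambda>i. c i * integral\<^sup>L M (\<lambda>t. \<phi> i t * g t)) sums (LINT t|M. f t * g t)"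
    by (simp only: iF)
  then show ?thesis by (simp only: M_def)
qed


lemma basis_Gb: "k \<ge> 1 \<Longrightarrow> schoenberg_basis (2*k+1) N t = Gb k N t"
  by (simp add: schoenberg_basis_def Gb_def)

lemma basis_1: "schoenberg_basis 1 n t = cos (real n * t)"
  by (simp add: schoenberg_basis_def)

lemma gc_sum1: "k \<ge> 1 \<Longrightarrow> (\<Sum>m\<le>N. gc k N m) = 1"
proof -
  assume k: "k \<ge> 1"
  have "Gb k N 0 = 1" using k c_pos[of "real k" N] by (simp add: Gb_def)
  then show ?thesis using Gb_expand[of N N k 0] by simp
qed

lemma Gb_bd: "k \<ge> 1 \<Longrightarrow> \<bar>(\<Sum>m\<le>N. gc k N m * cos (real m * t))\<bar> \<le> 1"
proof -
  assume k: "k \<ge> 1"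
  have "\<bar>(\<Sum>m\<le>N. gc k N m * cos (real m * t))\<bar> \<le> (\<Sum>m\<le>N. \<bar>gc k N m * cos (real m * t)\<bar>)"
    by (rule sum_abs)
  also have "\<dots> \<le> (\<Sum>m\<le>N. gc k N m)"
    by (rule sum_mono) (simp add: abs_mult gc_nonneg mult_left_le)
  also have "\<dots> = 1" using gc_sum1[OF k] .
  finally show ?thesis .
qed

lemma coeff_rel:
  assumes k: "k \<ge> 1"
    and h1: "is_schoenberg_coeffs 1 \<psi> b1"
    and hk: "is_schoenberg_coeffs (2*k + 1) \<psi> bk"
  shows "(\<lambda>N. bk N * gc k N n) sums b1 n"
proof -
  define I where "I = integral\<^sup>L (lebesgue_on {0..pi}) (\<lambda>t. \<psi> t * cos (real n * t))"
  have b1: "\<forall>i. b1 i \<ge> 0" "summable b1" "\<forall>t\<in>{0..pi}. (\<lambda>i. b1 i * cos (real i * t)) sums \<psi> t"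
    using h1 by (auto simp: is_schoenberg_coeffs_def schoenberg_basis_def)
  have bk: "\<forall>i. bk i \<ge> 0" "summable bk" "\<forall>t\<in>{0..pi}. (\<lambda>i. bk i * Gb k i t) sums \<psi> t"
    using hk[unfolded is_schoenberg_coeffs_def basis_Gb[OF k]] by auto
  have gcont: "continuous_on {0..pi} (\<lambda>t. cos (real n * t))" by (intro continuous_intros)
  have A: "(\<lambda>i. b1 i * integral\<^sup>L (lebesgue_on {0..pi}) (\<lambda>t. cos (real i * t) * cos (real n * t))) sums I"
    unfolding I_def
  proof (rule int_series)
    show "summable (\<lambda>i. \<bar>b1 i\<bar>)" using b1 by simp
  qed (use b1 in \<open>auto intro!: continuous_intros\<close>)
  then have "(\<lambda>i. if i = n then b1 i * wt n else 0) sums I"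
    by (simp add: lint_cc if_distrib cong: if_cong)
  then have I1: "I = b1 n * wt n" using sums_single[of n "\<lambda>i. b1 i * wt n"] sums_unique2 by blast
  define phi where "phi N t = (\<Sum>m\<le>N. gc k N m * cos (real m * t))" for N t
  have B: "(\<lambda>N. bk N * integral\<^sup>L (lebesgue_on {0..pi}) (\<lambda>t. phi N t * cos (real n * t))) sums I"
    unfolding I_def
  proof (rule int_series)
    show "summable (\<lambda>i. \<bar>bk i\<bar>)" using bk by simp
    show "continuous_on {0..pi} (phi i)" for i unfolding phi_def by (intro continuous_intros)
    show "\<bar>phi i t\<bar> \<le> 1" for i t unfolding phi_def by (rule Gb_bd[OF k])
    show "(\<lambda>i. bk i * phi i t) sums \<psi> t" if "t \<in> {0..pi}" for t
      using bk(3) that by (simp add: phi_def Gb_expand[symmetric])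
  qed (use gcont in auto)
  have L: "integral\<^sup>L (lebesgue_on {0..pi}) (\<lambda>t. phi N t * cos (real n * t)) = gc k N n * wt n" for N
  proof -
    have "integral\<^sup>L (lebesgue_on {0..pi}) (\<lambda>t. phi N t * cos (real n * t))
        = integral\<^sup>L (lebesgue_on {0..pi}) (\<lambda>t. \<Sum>m\<le>N. gc k N m * (cos (real m * t) * cos (real n * t)))"
      unfolding phi_def by (simp add: sum_distrib_right mult.assoc)
    also have "\<dots> = (\<Sum>m\<le>N. integral\<^sup>L (lebesgue_on {0..pi}) (\<lambda>t. gc k N m * (cos (real m * t) * cos (real n * t))))"
      by (rule Bochner_Integration.integral_sum) (intro continuous_imp_integrable_real continuous_intros)
    also have "\<dots> = (\<Sum>m\<le>N. gc k N m * (if m = n then wt n else 0))"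
      by (simp add: integral_mult_right_zero lint_cc)
    also have "\<dots> = gc k N n * wt n"
      by (cases "n \<le> N") (simp_all add: if_distrib gc_zero cong: if_cong)
    finally show ?thesis .
  qed
  have "(\<lambda>N. bk N * gc k N n * wt n) sums (b1 n * wt n)" using B unfolding L I1 by (simp add: mult.assoc)
  then have "(\<lambda>N. bk N * gc k N n * wt n / wt n) sums (b1 n * wt n / wt n)" by (rule sums_divide)
  moreover have "wt n \<noteq> 0" by (simp add: wt_def)
  ultimately show ?thesis by simp
qed

theorem theorem1:
  fixes k :: nat and \<psi> :: "real \<Rightarrow> real" and b1 bk :: "nat \<Rightarrow> real"
  assumes "k \<ge> 1"
    and "\<psi> \<in> Psi (2*k + 1)"
    and "is_schoenberg_coeffs 1 \<psi> b1"
    and "is_schoenberg_coeffs (2*k + 1) \<psi> bk"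
  shows "\<forall>n. bk n = (\<Sum>i\<le>k. coef_a i n k * b1 (n + 2*i))"
proof
  fix n
  have S: "(\<lambda>N. bk N * gc k N (n + 2*i)) sums b1 (n + 2*i)" for i
    using coeff_rel[OF assms(1) assms(3) assms(4)] .
  have "(\<lambda>N. \<Sum>i\<le>k. coef_a i n k * (bk N * gc k N (n + 2*i))) sums (\<Sum>i\<le>k. coef_a i n k * b1 (n + 2*i))"
    by (rule sums_sum) (rule sums_mult[OF S])
  moreover have "(\<Sum>i\<le>k. coef_a i n k * (bk N * gc k N (n + 2*i))) = (if N = n then bk N else 0)" for N
  proof -
    have "(\<Sum>i\<le>k. coef_a i n k * (bk N * gc k N (n + 2*i))) = bk N * Dc k n N"
      by (simp add: Dc_def coef_ac[OF assms(1)] sum_distrib_left algebra_simps)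
    then show ?thesis by (simp add: Dc_delta)
  qed
  ultimately have "(\<lambda>N. if N = n then bk N else 0) sums (\<Sum>i\<le>k. coef_a i n k * b1 (n + 2*i))" by simp
  then show "bk n = (\<Sum>i\<le>k. coef_a i n k * b1 (n + 2*i))" using sums_single[of n bk] sums_unique2 by blast
qed


end
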